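(* Let $d\ge 2$ be even and let $\mathcal{D}$ be the distribution on $\mathbb{R}^d\times\{\pm1\}$ given by: $y\in\{+1,-1\}$ with probability $1/2$ each, an index $j^*$ chosen uniformly at random from $\{1,\dots,d/2\}$, and $x=y\,e_{j^*}$, where $e_i$ denotes the $i$-th standard basis vector of $\mathbb{R}^d$; write $j^*(x)$ for this index. Define the probability distribution $$\tilde\nu=\frac{1}{d}\sum_{i=1}^{d/2}\left(\delta_{\theta_i}+\delta_{\theta'_i}\right)$$ on $\mathbb{R}\times\mathbb{R}^d\times\mathbb{R}$, where $\theta_i=\left(\frac{1}{\sqrt2},\frac{3}{\sqrt{20}}e_i,\frac{-1}{\sqrt{20}}\right)$ and $\theta'_i=\left(\frac{-1}{\sqrt2},\frac{-3}{\sqrt{20}}e_i,\frac{-1}{\sqrt{20}}\right)$. Then for every $(x,y)$ in the support of $\mathcal{D}$, $\nabla_x\mathcal{L}(\tilde\nu,(x,y)) = c\cdot e_{j^*(x)}$ for some constant $c\neq 0$.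
   Context: For a probability distribution $\nu$ over parameters $(w,r,b)\in\mathbb{R}\times\mathbb{R}^d\times\mathbb{R}$, the network output is $f(\nu,x)=\mathbb{E}_{(w,r,b)\sim\nu}[w\,\phi(\langle r,x\rangle+b)]$ with $\phi(t)=\max(t,0)$, and the cross-entropy loss is $\mathcal{L}(\nu,(x,y))=\log(1+\exp(-y f(\nu,x)))$. $\delta_\theta$ is the point mass at $\theta$, and $\nabla_x\mathcal{L}$ is the gradient of the loss with respect to the input $x$. *)

theory Defs
  imports "HOL-Analysis.Analysis" "HOL-Probability.Probability" "HOL-Library.Numeral_Type"
begin

text \<open>Dimension d = CARD('k bit0) = 2 * CARD('k): an arbitrary even d \<ge> 2.
  Coordinates are indexed by the type 'k bit0, whose elements are 0,1,...,d-1;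
  the paper's index i \<in> {1..d} corresponds to the element of_nat (i - 1).\<close>

definition stdbasis :: "nat \<Rightarrow> (real ^ ('k::finite bit0))" where
  "stdbasis i = axis (of_nat (i - 1)) 1"

definition relu :: "real \<Rightarrow> real" where
  "relu t = max t 0"

definition net :: "(real \<times> ('n::real_inner) \<times> real) measure \<Rightarrow> 'n \<Rightarrow> real" where
  "net \<nu> x = (\<integral>p. (case p of (w, r, b) \<Rightarrow> w * relu (inner r x + b)) \<partial>\<nu>)"

definition loss :: "(real \<times> ('n::real_inner) \<times> real) measure \<Rightarrow> 'n \<times> real \<Rightarrow> real" where
  "loss \<nu> xy = ln (1 + exp (- snd xy * net \<nu> (fst xy)))"

definition dataD :: "((real ^ ('k::finite bit0)) \<times> real) pmf" where
  "dataD = do {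
     y \<leftarrow> pmf_of_set {1, -1 :: real};
     j \<leftarrow> pmf_of_set {1 .. CARD('k bit0) div 2};
     return_pmf (y *\<^sub>R stdbasis j, y) }"

definition jstar :: "(real ^ ('k::finite bit0)) \<Rightarrow> nat" where
  "jstar x = (THE j. j \<in> {1 .. CARD('k bit0) div 2} \<and> (x = stdbasis j \<or> x = - stdbasis j))"

definition theta :: "nat \<Rightarrow> real \<times> (real ^ ('k::finite bit0)) \<times> real" where
  "theta i = (1 / sqrt 2, (3 / sqrt 20) *\<^sub>R stdbasis i, -1 / sqrt 20)"

definition theta' :: "nat \<Rightarrow> real \<times> (real ^ ('k::finite bit0)) \<times> real" where
  "theta' i = (-1 / sqrt 2, (-3 / sqrt 20) *\<^sub>R stdbasis i, -1 / sqrt 20)"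

text \<open>nu~ = (1/d) sum_{i=1}^{d/2} (delta_{theta_i} + delta_{theta'_i}),
  written as: i uniform on {1..d/2}, then theta_i or theta'_i with probability 1/2 each.\<close>
definition nutilde :: "(real \<times> (real ^ ('k::finite bit0)) \<times> real) pmf" where
  "nutilde = do {
     i \<leftarrow> pmf_of_set {1 .. CARD('k bit0) div 2};
     s \<leftarrow> pmf_of_set {True, False};
     return_pmf (if s then theta i else theta' i) }"

end

theory Submission
  imports Defs
begin

definition hterm :: "real \<Rightarrow> real" where
  "hterm t = ((1/sqrt 2) * relu (3/sqrt 20 * t - 1/sqrt 20) - (1/sqrt 2) * relu (-3/sqrt 20 * t - 1/sqrt 20)) / 2"

lemma net_formula:
  fixes x' :: "real ^ ('k::finite bit0)"
  shows "net (measure_pmf (nutilde :: (real \<times> (real ^ ('k bit0)) \<times> real) pmf)) x'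
     = (\<Sum>i\<in>{1..CARD('k)}. hterm (x' $ of_nat (i-1))) / real CARD('k)"
  unfolding net_def nutilde_def
  apply (subst pmf_expectation_bind_pmf_of_set)
     apply auto[3]
  apply (subst pmf_expectation_bind_pmf_of_set)
     apply auto[3]
  apply (simp add: theta_def theta'_def stdbasis_def inner_axis' hterm_def sum_divide_distrib[symmetric] algebra_simps)
  apply (simp add: sum_divide_distrib diff_divide_distrib algebra_simps)
  apply (intro sum.cong refl)
  apply (simp add: field_simps minus_diff_commute)
  done

lemma rep_of_nat: "a < 2*CARD('k::finite) \<Longrightarrow> Rep_bit0 (of_nat a :: 'k bit0) = int a"
  by (simp add: bit0.of_nat_eq bit0.Abs_inverse)

lemma of_nat_inj_bit0: "a < 2*CARD('k::finite) \<Longrightarrow> b < 2*CARD('k) \<Longrightarrow> (of_nat a :: 'k bit0) = of_nat b \<Longrightarrow> a = b"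
  by (metis rep_of_nat of_nat_eq_iff)

lemma hterm_zero: "\<bar>t\<bar> < 1/3 \<Longrightarrow> hterm t = 0"
  unfolding hterm_def relu_def by (auto simp: max_def field_simps)

lemma hterm_lin: "(y = 1 \<or> y = -1) \<Longrightarrow> \<bar>t - y\<bar> < 1/3 \<Longrightarrow> hterm t = (3*t - y) / (2 * sqrt 2 * sqrt 20)"
proof -
  assume y: "y = 1 \<or> y = -1" and t: "\<bar>t - y\<bar> < 1/3"
  have s20: "sqrt 20 > 0" by simp
  show ?thesis
  proof (cases "y = 1")
    case True
    have "t > 2/3" using t True by arith
    have a: "3/sqrt 20 * t - 1/sqrt 20 = (3*t - 1)/sqrt 20" "-3/sqrt 20 * t - 1/sqrt 20 = (-3*t - 1)/sqrt 20"
      by (simp_all add: diff_divide_distrib)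
    have b: "(3*t - 1)/sqrt 20 \<ge> 0" "(-3*t - 1)/sqrt 20 \<le> 0"
      using \<open>t > 2/3\<close> by (auto intro!: divide_nonneg_pos divide_nonpos_pos)
    show ?thesis unfolding hterm_def relu_def a using b True by (simp add: max_def)
  next
    case False
    then have yy: "y = -1" using y by auto
    have "t < -2/3" using t yy by arith
    have a: "3/sqrt 20 * t - 1/sqrt 20 = (3*t - 1)/sqrt 20" "-3/sqrt 20 * t - 1/sqrt 20 = (-3*t - 1)/sqrt 20"
      by (simp_all add: diff_divide_distrib)
    have b: "(3*t - 1)/sqrt 20 \<le> 0" "(-3*t - 1)/sqrt 20 \<ge> 0"
      using \<open>t < -2/3\<close> by (auto intro!: divide_nonneg_pos divide_nonpos_pos)
    show ?thesis unfolding hterm_def relu_def a using b yy by (simp add: max_def field_simps)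
  qed
qed

lemma gderiv_test:
  fixes J :: "'k::finite bit0" and x :: "real ^ 'k bit0" and a b y :: real
  defines "e \<equiv> - y * (a * x $ J + b)"
  shows "((\<lambda>x'. ln (1 + exp (- y * (a * x' $ J + b)))) has_derivative
     (\<lambda>h. (- y * exp e / (1 + exp e)) * (a * h $ J))) (at x)"
proof -
  have d1: "((\<lambda>x'. x' $ J) has_derivative (\<lambda>h. h $ J)) (at x)"
    by (rule bounded_linear_imp_has_derivative[OF bounded_linear_vec_nth])
  have d2: "((\<lambda>x'. a * x' $ J + b) has_derivative (\<lambda>h. a * h $ J)) (at x)"
    using has_derivative_add[OF has_derivative_mult_right[OF d1, of a] has_derivative_const[of b]] by simp
  have d3: "((\<lambda>u. ln (1 + exp (- y * u))) has_field_derivative (- y * exp e / (1 + exp e))) (at (a * x $ J + b))"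
    unfolding e_def
    by (auto intro!: derivative_eq_intros simp: add_pos_pos field_simps)
  show ?thesis
    using has_derivative_compose[OF d2 has_field_derivative_imp_has_derivative[OF d3]] by simp
qed

theorem mainTheorem2:
  fixes x :: "real ^ ('k::finite bit0)" and y :: real
  assumes "(x, y) \<in> set_pmf (dataD :: ((real ^ ('k bit0)) \<times> real) pmf)"
  shows "\<exists>c. c \<noteq> 0 \<and>
    GDERIV (\<lambda>x'. loss (measure_pmf (nutilde :: (real \<times> (real ^ ('k bit0)) \<times> real) pmf)) (x', y)) x
      :> c *\<^sub>R (stdbasis (jstar x) :: real ^ ('k bit0))"
proof -
  let ?K = "CARD('k)"
  from assms obtain j where y: "y = 1 \<or> y = -1" and j: "j \<in> {1..?K}" and x: "x = y *\<^sub>R stdbasis j"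
    by (auto simp: dataD_def set_bind_pmf)
  define J where "J = (of_nat (j-1) :: 'k bit0)"
  have xax: "x = axis J y" using x unfolding stdbasis_def J_def[symmetric]
    by (simp add: vec_eq_iff axis_def)
  have xJ: "x $ J = y" using xax by simp
  have js: "jstar x = j"
    unfolding jstar_def
  proof (rule the_equality)
    show "j \<in> {1..CARD('k bit0) div 2} \<and> (x = stdbasis j \<or> x = - stdbasis j)" using y j x by auto
  next
    fix b assume b: "b \<in> {1..CARD('k bit0) div 2} \<and> (x = stdbasis b \<or> x = - stdbasis b)"
    define B where "B = (of_nat (b-1) :: 'k bit0)"
    have "x = axis B 1 \<or> x = axis B (-1)" using b unfolding stdbasis_def B_def[symmetric]
      by (auto simp: vec_eq_iff axis_def)
    then have "B = J" using xax y by (auto simp: axis_eq_axis)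
    moreover have lt: "b-1 < 2*?K" "j-1 < 2*?K" using b j by auto
    ultimately have "b-1 = j-1" using of_nat_inj_bit0[where 'k='k, OF lt] unfolding B_def J_def by blast
    then show "b = j" using b j by auto
  qed
  define C where "C = 2 * sqrt 2 * sqrt 20 * real ?K"
  have Cpos: "C > 0" unfolding C_def by simp
  have loc: "loss (measure_pmf nutilde) (x', y) = ln (1 + exp (- y * ((3/C) * x' $ J + (-y/C))))"
    if "x' \<in> ball x (1/3)" for x'
  proof -
    from that have nd: "norm (x' - x) < 1/3" by (simp add: dist_norm norm_minus_commute)
    have comp: "\<bar>x' $ I - x $ I\<bar> < 1/3" for I
      using component_le_norm_cart[of "x' - x" I] nd by simp
    have "(\<Sum>i\<in>{1..?K}. hterm (x' $ of_nat (i-1))) = hterm (x' $ of_nat (j-1)) + (\<Sum>i\<in>{1..?K}-{j}. hterm (x' $ of_nat (i-1)))"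
      using j by (simp add: sum.remove)
    also have "(\<Sum>i\<in>{1..?K}-{j}. hterm (x' $ of_nat (i-1))) = 0"
    proof (rule sum.neutral, rule ballI)
      fix i assume i: "i \<in> {1..?K}-{j}"
      define I where "I = (of_nat (i-1) :: 'k bit0)"
      have lt: "i-1 < 2*?K" "j-1 < 2*?K" using i j by auto
      have "i-1 \<noteq> j-1" using i j by auto
      then have "I \<noteq> J" using of_nat_inj_bit0[where 'k='k, OF lt] unfolding J_def I_def by blast
      then have "x $ I = 0" using xax by (simp add: axis_def)
      then have "hterm (x' $ I) = 0" using comp[of I] by (intro hterm_zero) simp
      then show "hterm (x' $ of_nat (i-1)) = 0" unfolding I_def .
    qed
    also have "hterm (x' $ of_nat (j-1)) = (3 * x' $ J - y) / (2 * sqrt 2 * sqrt 20)"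
      using hterm_lin[OF y, of "x' $ J"] comp[of J] xJ unfolding J_def by simp
    finally have "net (measure_pmf (nutilde :: (real \<times> (real ^ ('k bit0)) \<times> real) pmf)) x' = (3/C) * x' $ J + (-y/C)"
      unfolding net_formula C_def by (simp add: field_simps)
    then show ?thesis unfolding loss_def by simp
  qed
  define e where "e = - y * ((3/C) * x $ J + (-y/C))"
  define c where "c = (- y * exp e / (1 + exp e)) * (3/C)"
  have "c \<noteq> 0" using y Cpos add_pos_pos[OF zero_less_one exp_gt_zero[of e]] by (auto simp: c_def)
  have der: "((\<lambda>x'. ln (1 + exp (- y * ((3/C) * x' $ J + (-y/C))))) has_derivative (\<lambda>h. inner h (c *\<^sub>R stdbasis j))) (at x)"
    using gderiv_test[of y "3/C" J "-y/C" x] unfolding stdbasis_def J_def[symmetric]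
    by (simp add: c_def e_def inner_axis mult.commute mult.left_commute mult.assoc)
  have "GDERIV (\<lambda>x'. loss (measure_pmf (nutilde :: (real \<times> (real ^ ('k bit0)) \<times> real) pmf)) (x', y)) x
      :> c *\<^sub>R (stdbasis (jstar x) :: real ^ ('k bit0))"
    unfolding gderiv_def js
    by (rule has_derivative_transform_within_open[OF der, of "ball x (1/3)"]) (use loc in auto)
  with \<open>c \<noteq> 0\<close> show ?thesis by blast
qed

end
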